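(* Let $G_{\max}=(V,E_{\max})$ be a finite, simple, connected, undirected graph, and let $\lambda',\mu',\gamma'>0$ with $\frac{\lambda'}{\mu'}>1$ and $0<\gamma'\le 1$ (Regime III). For a network state $\mathbf{A}$ (a subset $E(\mathbf{A})\subseteq E_{\max}$ of closed edges) let $g(E(\mathbf{A}))$ be the number of $C_3$ subgraphs (triangles) formed by $E(\mathbf{A})$, and call a maximizer of $\pi(\mathbf{A})\propto(\lambda'/\mu')^{|E(\mathbf{A})|}\gamma'^{\,g(E(\mathbf{A}))}$ over all network states a most-probable network (for TRI-DBP). If $\lambda'\gamma'<\mu'$, then the most-probable networks are exactly the network states $\mathbf{A}^*$ with $g(E(\mathbf{A}^* ))=0$ and $|E(\mathbf{A}^* )|$ maximum among such states; equivalently, $(V,E(\mathbf{A}^* ))$ is a largest possible (maximum number of edges) triangle-free subgraph of $G_{\max}$. *)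

theory Defs
  imports Main "HOL-Analysis.Analysis"
begin

definition simple_graph :: "'a set \<Rightarrow> 'a set set \<Rightarrow> bool" where
  "simple_graph V E \<longleftrightarrow> finite V \<and>
     (\<forall>e\<in>E. \<exists>u v. u \<in> V \<and> v \<in> V \<and> u \<noteq> v \<and> e = {u, v})"

definition graph_connected :: "'a set \<Rightarrow> 'a set set \<Rightarrow> bool" where
  "graph_connected V E \<longleftrightarrow> V \<noteq> {} \<and>
     (\<forall>u\<in>V. \<forall>v\<in>V. (u, v) \<in> {(x, y). {x, y} \<in> E}\<^sup>*)"

definition network_states :: "'a set set \<Rightarrow> 'a set set set" where
  "network_states Emax = Pow Emax"

definition num_triangles :: "'a set \<Rightarrow> 'a set set \<Rightarrow> nat" where
  "num_triangles V E = card {T. T \<subseteq> V \<and> card T = 3 \<and>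
      (\<forall>x\<in>T. \<forall>y\<in>T. x \<noteq> y \<longrightarrow> {x, y} \<in> E)}"

definition tri_weight :: "real \<Rightarrow> real \<Rightarrow> real \<Rightarrow> 'a set \<Rightarrow> 'a set set \<Rightarrow> real" where
  "tri_weight lam mu gam V E = (lam / mu) ^ card E * gam ^ num_triangles V E"

definition tri_pi :: "real \<Rightarrow> real \<Rightarrow> real \<Rightarrow> 'a set \<Rightarrow> 'a set set \<Rightarrow> 'a set set \<Rightarrow> real" where
  "tri_pi lam mu gam V Emax E =
     tri_weight lam mu gam V E / (\<Sum>F\<in>network_states Emax. tri_weight lam mu gam V F)"

definition most_probable :: "real \<Rightarrow> real \<Rightarrow> real \<Rightarrow> 'a set \<Rightarrow> 'a set set \<Rightarrow> 'a set set set" where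
  "most_probable lam mu gam V Emax =
     {E \<in> network_states Emax. \<forall>F\<in>network_states Emax.
        tri_pi lam mu gam V Emax F \<le> tri_pi lam mu gam V Emax E}"

end

theory Submission
  imports Defs
begin

lemma tri_finite:
  assumes "finite V"
  shows "finite {T. T \<subseteq> V \<and> card T = 3 \<and> (\<forall>x\<in>T. \<forall>y\<in>T. x \<noteq> y \<longrightarrow> {x, y} \<in> E)}"
  using assms by (rule rev_finite_subset[OF finite_Pow_iff[THEN iffD2]]) auto

lemma drop_edge:
  fixes lam mu gam :: real
  assumes r1: "lam / mu > 1" and g0: "gam > 0" and g1: "gam \<le> 1"
    and rg: "(lam / mu) * gam < 1" and fV: "finite V" and fE: "finite E"
    and pos: "num_triangles V E > 0"
  shows "\<exists>e\<in>E. num_triangles V (E - {e}) < num_triangles V E \<and>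
     tri_weight lam mu gam V E < tri_weight lam mu gam V (E - {e})"
proof -
  define tri where "tri = (\<lambda>E. {T. T \<subseteq> V \<and> card T = 3 \<and> (\<forall>x\<in>T. \<forall>y\<in>T. x \<noteq> y \<longrightarrow> {x, y} \<in> E)})"
  have nt: "\<And>E. num_triangles V E = card (tri E)" unfolding tri_def num_triangles_def by simp
  have ft: "\<And>E. finite (tri E)" unfolding tri_def using tri_finite[OF fV] by blast
  from pos have "tri E \<noteq> {}" using nt by (metis card.empty less_irrefl)
  then obtain T where T: "T \<in> tri E" by blast
  then have "card T = 3" unfolding tri_def by simp
  then obtain x y z where xyz: "T = {x,y,z}" "x \<noteq> y" "x \<noteq> z" "y \<noteq> z"
    by (auto simp: card_3_iff)
  define e where "e = {x,y}"
  have eE: "e \<in> E" using T xyz unfolding tri_def e_def by auto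
  have sub: "tri (E - {e}) \<subseteq> tri E - {T}"
    unfolding tri_def using xyz e_def by auto
  have "card (tri (E - {e})) < card (tri E)"
    by (rule psubset_card_mono[OF ft]) (use sub T in blast)
  hence lt: "num_triangles V (E - {e}) < num_triangles V E" using nt by simp
  define r where "r = lam / mu"
  define a where "a = card (E - {e})"
  define g' where "g' = num_triangles V (E - {e})"
  define k where "k = num_triangles V E - g'"
  have cE: "card E = Suc a" unfolding a_def using eE fE
    by (metis card_Suc_Diff1)
  have gE: "num_triangles V E = g' + k" "k \<ge> 1" using lt unfolding k_def g'_def by auto
  have "gam ^ k \<le> gam" using g0 g1 \<open>k \<ge> 1\<close> using power_decreasing[of 1 k gam] by simp
  hence q: "r * gam ^ k < 1" using rg r1 r_def
    by (smt (verit) mult_left_mono)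
  have p: "r ^ a * gam ^ g' > 0" using r1 g0 r_def by simp
  have "tri_weight lam mu gam V E = (r ^ a * gam ^ g') * (r * gam ^ k)"
    unfolding tri_weight_def r_def[symmetric] cE gE by (simp add: power_add)
  also have "\<dots> < r ^ a * gam ^ g'" using mult_strict_left_mono[OF q p] by simp
  also have "\<dots> = tri_weight lam mu gam V (E - {e})"
    unfolding tri_weight_def r_def a_def g'_def by simp
  finally show ?thesis using lt eE by blast
qed

lemma reduce:
  fixes lam mu gam :: real
  assumes r1: "lam / mu > 1" and g0: "gam > 0" and g1: "gam \<le> 1"
    and rg: "(lam / mu) * gam < 1" and fV: "finite V"
  shows "\<And>F. finite F \<Longrightarrow> num_triangles V F = n \<Longrightarrow> \<exists>F'\<subseteq>F. num_triangles V F' = 0 \<and>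
      tri_weight lam mu gam V F \<le> tri_weight lam mu gam V F'"
proof (induction n rule: less_induct)
  case (less n F)
  show ?case
  proof (cases "n = 0")
    case True thus ?thesis using less.prems by (intro exI[of _ F]) simp
  next
    case False
    hence pos: "num_triangles V F > 0" using less.prems(2) by simp
    obtain e where e: "e \<in> F" "num_triangles V (F - {e}) < num_triangles V F"
      "tri_weight lam mu gam V F < tri_weight lam mu gam V (F - {e})"
      using drop_edge[OF r1 g0 g1 rg fV less.prems(1) pos] by blast
    have fF: "finite (F - {e})" using less.prems(1) by simp
    have lt: "num_triangles V (F - {e}) < n" using e(2) less.prems(2) by simp
    obtain F' where F': "F' \<subseteq> F - {e}" "num_triangles V F' = 0"
      "tri_weight lam mu gam V (F - {e}) \<le> tri_weight lam mu gam V F'"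
      using less.IH[OF lt fF refl] by blast
    have "F' \<subseteq> F" using F'(1) by blast
    moreover have "tri_weight lam mu gam V F \<le> tri_weight lam mu gam V F'" using e(3) F'(3) by linarith
    ultimately show ?thesis using F'(2) by blast
  qed
qed

theorem theorem7:
  fixes V :: "'a set" and Emax :: "'a set set" and lam mu gam :: real
  assumes "simple_graph V Emax" and "graph_connected V Emax"
    and "lam > 0" and "mu > 0" and "gam > 0"
    and "lam / mu > 1" and "gam \<le> 1"
    and "lam * gam < mu"
  shows "most_probable lam mu gam V Emax =
     {E \<in> network_states Emax. num_triangles V E = 0 \<and>
        (\<forall>F\<in>network_states Emax. num_triangles V F = 0 \<longrightarrow> card F \<le> card E)}"
proof -
  have fV: "finite V" using assms(1) unfolding simple_graph_def by simp
  have "Emax \<subseteq> Pow V" using assms(1) unfolding simple_graph_def by auto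
  hence fE: "finite Emax" using fV by (simp add: finite_subset)
  have rg: "(lam / mu) * gam < 1" using assms(4) assms(8) by (simp add: field_simps)
  define w where "w = tri_weight lam mu gam V"
  have wpos: "\<And>F. w F > 0" unfolding w_def tri_weight_def using assms by simp
  define Z where "Z = (\<Sum>F\<in>network_states Emax. w F)"
  have "Z > 0" unfolding Z_def network_states_def
    by (rule sum_pos) (use fE wpos in auto)
  then have pi: "\<And>F G. tri_pi lam mu gam V Emax F \<le> tri_pi lam mu gam V Emax G \<longleftrightarrow> w F \<le> w G"
  proof -
    fix F G
    show "tri_pi lam mu gam V Emax F \<le> tri_pi lam mu gam V Emax G \<longleftrightarrow> w F \<le> w G"
      unfolding tri_pi_def w_def[symmetric] Z_def[symmetric]
      using \<open>Z > 0\<close> by (simp add: divide_le_cancel)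
  qed
  have mp: "most_probable lam mu gam V Emax = {E \<in> Pow Emax. \<forall>F\<in>Pow Emax. w F \<le> w E}"
    unfolding most_probable_def network_states_def using pi by auto
  have w0: "\<And>F. num_triangles V F = 0 \<Longrightarrow> w F = (lam/mu) ^ card F"
    unfolding w_def tri_weight_def by simp
  have red: "\<And>F. F \<subseteq> Emax \<Longrightarrow> \<exists>F'\<subseteq>F. num_triangles V F' = 0 \<and> w F \<le> w F'"
  proof -
    fix F assume "F \<subseteq> Emax"
    hence "finite F" using fE by (rule finite_subset)
    thus "\<exists>F'\<subseteq>F. num_triangles V F' = 0 \<and> w F \<le> w F'"
      unfolding w_def by (rule reduce[OF assms(6) assms(5) assms(7) rg fV _ refl])
  qed
  have mono: "\<And>m n. (lam/mu) ^ m \<le> (lam/mu) ^ n \<longleftrightarrow> m \<le> n"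
    using assms(6) by simp
  show ?thesis
    unfolding mp network_states_def
  proof (intro equalityI subsetI)
    fix E assume E: "E \<in> {E \<in> Pow Emax. \<forall>F\<in>Pow Emax. w F \<le> w E}"
    have g: "num_triangles V E = 0"
    proof (rule ccontr)
      assume "num_triangles V E \<noteq> 0"
      hence pos: "num_triangles V E > 0" by simp
      have EE: "E \<subseteq> Emax" and all: "\<forall>F\<in>Pow Emax. w F \<le> w E" using E by auto
      have "finite E" using EE fE by (rule finite_subset)
      then obtain e where "e \<in> E" "w E < w (E - {e})"
        using drop_edge[OF assms(6) assms(5) assms(7) rg fV _ pos]
        unfolding w_def by blast
      moreover have "E - {e} \<in> Pow Emax" using EE by auto
      hence "w (E - {e}) \<le> w E" using all by (rule bspec[rotated])
      ultimately show False by linarith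
    qed
    have "\<forall>F\<in>Pow Emax. num_triangles V F = 0 \<longrightarrow> card F \<le> card E"
    proof (intro ballI impI)
      fix F assume "F \<in> Pow Emax" "num_triangles V F = 0"
      hence "w F \<le> w E" using E by blast
      thus "card F \<le> card E" using w0[OF g] w0[OF \<open>num_triangles V F = 0\<close>] mono by simp
    qed
    thus "E \<in> {E \<in> Pow Emax. num_triangles V E = 0 \<and>
        (\<forall>F\<in>Pow Emax. num_triangles V F = 0 \<longrightarrow> card F \<le> card E)}" using E g by blast
  next
    fix E assume E: "E \<in> {E \<in> Pow Emax. num_triangles V E = 0 \<and>
        (\<forall>F\<in>Pow Emax. num_triangles V F = 0 \<longrightarrow> card F \<le> card E)}"
    have "\<forall>F\<in>Pow Emax. w F \<le> w E"
    proof
      fix F assume F: "F \<in> Pow Emax"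
      then obtain F' where F': "F' \<subseteq> F" "num_triangles V F' = 0" "w F \<le> w F'"
        using red by blast
      have "F' \<in> Pow Emax" using F F'(1) by auto
      hence "card F' \<le> card E" using E F'(2) by blast
      moreover have "num_triangles V E = 0" using E by blast
      ultimately have "w F' \<le> w E" using w0[OF F'(2)] w0[of E] mono by simp
      thus "w F \<le> w E" using F' by linarith
    qed
    thus "E \<in> {E \<in> Pow Emax. \<forall>F\<in>Pow Emax. w F \<le> w E}" using E by blast
  qed
qed

end
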